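(* In the BICM setting described in the context, with message $1$ transmitted and $\mathsf D$ the ORBGRAND metric, $$\lim_{N\to\infty}\mathbb E[\mathsf D(1)]=\frac1m\sum_{j=1}^m\Bigg(\frac12\int_{\mathcal R_{1,j}}\bar\Psi\Big(\Big|\ln\frac{q_j^+(y)}{q_j^-(y)}\Big|\Big)q_j^+(y)\,\mathrm dy+\frac12\int_{\mathcal R_{2,j}}\bar\Psi\Big(\Big|\ln\frac{q_j^+(y)}{q_j^-(y)}\Big|\Big)q_j^-(y)\,\mathrm dy\Bigg).$$
   Context: Let $m\ge1$, let $\mathcal S$ be a constellation with $|\mathcal S|=2^m$, and let $\mu:\{+1,-1\}^m\to\mathcal S$ be a bijective labeling. For $s\in\mathcal S$, let $b_j(s)$ be the $j$-th coordinate of $\mu^{-1}(s)$. The channel is memoryless with output space $\mathbb R^d$ (norm $|\cdot|$) and transition densities $p(y\mid s)$. For $j=1,\dots,m$ define $$q_j^\pm(y)=2^{-(m-1)}\sum_{s:\,b_j(s)=\pm1}p(y\mid s).$$ For each $j$, let $\mathsf X_j$ be uniform on $\{\pm1\}$ and let $\mathsf Y$ have density $q_j^{\mathsf X_j}$ given $\mathsf X_j$. Let $\Psi_j$ be the CDF of $|\ln(q_j^+(\mathsf Y)/q_j^-(\mathsf Y))|$, and let $\bar\Psi=\frac1m\sum_j\Psi_j$. Assume that for each $j$: (A1) there exist $M_1>0$, $a>0$ and a polynomial $S_1$ with $q_j^\pm(y)<S_1(|y|)e^{-a|y|}$ for $|y|>M_1$; (A2) there exist $M_2>0$ and a polynomial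 $S_2$ with $|\ln(q_j^+(y)/q_j^-(y))|<S_2(|y|)$ for $|y|>M_2$; (A3) $\Psi_j$, $\Psi_j^{-1}$, $\bar\Psi$ and $\bar\Psi^{-1}$ are smooth with finite first, second and third derivatives. Let $\mathcal R_{1,j}=\{y:q_j^+(y)<q_j^-(y)\}$ and $\mathcal R_{2,j}=\{y:q_j^+(y)>q_j^-(y)\}$. Random coding: the codebook has $\lceil e^{NR}\rceil$ codewords, each consisting of bits $\mathsf X_{i,j}(w)$, $i\le N$, $j\le m$, all i.i.d. uniform on $\{\pm1\}$. Message $1$ is transmitted. Symbol $i$ is $s_i(1)=\mu(\mathsf X_{i,1}(1),\dots,\mathsf X_{i,m}(1))$, and the outputs $\mathsf Y_i$ are conditionally independent with densities $p(\cdot\mid s_i(1))$. Let $\mathsf T_{i,j}=\ln(q_j^+(\mathsf Y_i)/q_j^-(\mathsf Y_i))$. Let $\mathsf R_{i,j}$ be the rank of $|\mathsf T_{i,j}|$ among all $mN$ values (rank $1$ is the smallest). Let $\mathrm{sgn}(t)=1$ if $t\ge0$ and $-1$ otherwise. The ORBGRAND metric is $$\mathsf D(w)=\frac1{mN}\sum_{i,j}\frac{\mathsf R_{i,j}}{mN}\mathbf 1\big(\mathrm{sgn}(\mathsf T_{i,j})\mathsf X_{i,j}(w)<0\big).$$ *)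

theory Defs
  imports "HOL-Analysis.Analysis" "HOL-Computational_Algebra.Polynomial"
begin

definition bitvecs :: "nat \<Rightarrow> (nat \<Rightarrow> real) set" where
  "bitvecs m = PiE {..<m} (\<lambda>_. {-1, 1})"

definition lab_bit :: "nat \<Rightarrow> ((nat \<Rightarrow> real) \<Rightarrow> 's) \<Rightarrow> 's \<Rightarrow> nat \<Rightarrow> real" where
  "lab_bit m \<mu> s j = inv_into (bitvecs m) \<mu> s j"

definition qbit :: "nat \<Rightarrow> 's set \<Rightarrow> ((nat \<Rightarrow> real) \<Rightarrow> 's) \<Rightarrow> ('s \<Rightarrow> 'a \<Rightarrow> real)
    \<Rightarrow> nat \<Rightarrow> real \<Rightarrow> 'a \<Rightarrow> real" where
  "qbit m S \<mu> p j b y = (1/2) ^ (m - 1) * (\<Sum>s\<in>{s\<in>S. lab_bit m \<mu> s j = b}. p s y)"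

definition llr :: "nat \<Rightarrow> 's set \<Rightarrow> ((nat \<Rightarrow> real) \<Rightarrow> 's) \<Rightarrow> ('s \<Rightarrow> 'a \<Rightarrow> real)
    \<Rightarrow> nat \<Rightarrow> 'a \<Rightarrow> real" where
  "llr m S \<mu> p j y = ln (qbit m S \<mu> p j 1 y / qbit m S \<mu> p j (-1) y)"

text \<open>\<open>\<Psi>_j(t) = P(|T| \<le> t)\<close> with \<open>X\<close> uniform on \<open>{\<plusminus>1}\<close> and \<open>Y ~ q_j^X\<close>.\<close>
definition Psi :: "nat \<Rightarrow> 's set \<Rightarrow> ((nat \<Rightarrow> real) \<Rightarrow> 's) \<Rightarrow> ('s \<Rightarrow> 'a::euclidean_space \<Rightarrow> real)
    \<Rightarrow> nat \<Rightarrow> real \<Rightarrow> real" where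
  "Psi m S \<mu> p j t =
     1/2 * set_lebesgue_integral lborel {y. \<bar>llr m S \<mu> p j y\<bar> \<le> t} (qbit m S \<mu> p j 1)
   + 1/2 * set_lebesgue_integral lborel {y. \<bar>llr m S \<mu> p j y\<bar> \<le> t} (qbit m S \<mu> p j (-1))"

definition Psibar :: "nat \<Rightarrow> 's set \<Rightarrow> ((nat \<Rightarrow> real) \<Rightarrow> 's) \<Rightarrow> ('s \<Rightarrow> 'a::euclidean_space \<Rightarrow> real)
    \<Rightarrow> real \<Rightarrow> real" where
  "Psibar m S \<mu> p t = (\<Sum>j<m. Psi m S \<mu> p j t) / real m"

definition smooth_on :: "real set \<Rightarrow> (real \<Rightarrow> real) \<Rightarrow> bool" where
  "smooth_on A f \<longleftrightarrow> (\<forall>k. \<forall>t\<in>A. ((deriv ^^ k) f) differentiable (at t))"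

definition smooth_cdf :: "(real \<Rightarrow> real) \<Rightarrow> bool" where
  "smooth_cdf F \<longleftrightarrow> smooth_on {0<..} F \<and>
     (\<exists>G. (\<forall>u\<in>{0<..<1}. G u > 0 \<and> F (G u) = u) \<and> (\<forall>t>0. G (F t) = t) \<and> smooth_on {0<..<1} G)"

definition sgnb :: "real \<Rightarrow> real" where
  "sgnb t = (if t \<ge> 0 then 1 else -1)"

text \<open>Rank (1 = smallest) of \<open>A i j\<close> among \<open>A k l\<close>, \<open>k<N, l<m\<close>; ties broken by
  lexicographic index order (ties have probability zero).\<close>
definition rank_of :: "(nat \<Rightarrow> nat \<Rightarrow> real) \<Rightarrow> nat \<Rightarrow> nat \<Rightarrow> nat \<Rightarrow> nat \<Rightarrow> nat" where
  "rank_of A N m i j = 1 + card {(k, l). k < N \<and> l < m \<and>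
      (A k l < A i j \<or> (A k l = A i j \<and> (k < i \<or> (k = i \<and> l < j))))}"

definition orbgrand_D :: "nat \<Rightarrow> nat \<Rightarrow> (nat \<Rightarrow> nat \<Rightarrow> real) \<Rightarrow> (nat \<Rightarrow> nat \<Rightarrow> real) \<Rightarrow> real" where
  "orbgrand_D N m T x = (1 / real (m * N)) *
     (\<Sum>i<N. \<Sum>j<m. (real (rank_of (\<lambda>k l. \<bar>T k l\<bar>) N m i j) / real (m * N)) *
        (if sgnb (T i j) * x i j < 0 then 1 else 0))"

text \<open>\<open>E[D(1)]\<close> at block length N: the bits of the transmitted codeword are i.i.d. uniform,
  and \<open>Y_i\<close> are conditionally independent with densities \<open>p(\<cdot>|\<mu>(x_i))\<close>.\<close>
definition expected_D :: "nat \<Rightarrow> 's set \<Rightarrow> ((nat \<Rightarrow> real) \<Rightarrow> 's) \<Rightarrow> ('s \<Rightarrow> 'a::euclidean_space \<Rightarrow> real)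
    \<Rightarrow> nat \<Rightarrow> real" where
  "expected_D m S \<mu> p N =
     (\<Sum>x\<in>PiE {..<N} (\<lambda>_. bitvecs m). (1/2) ^ (m * N) *
        integral\<^sup>L (PiM {..<N} (\<lambda>_. lborel))
          (\<lambda>y. orbgrand_D N m (\<lambda>i j. llr m S \<mu> p j (y i)) x * (\<Prod>i<N. p (\<mu> (x i)) (y i))))"

end

theory Submission
  imports Defs
begin



locale orb =
  fixes m :: nat and S :: "'s set" and \<mu> :: "(nat \<Rightarrow> real) \<Rightarrow> 's"
    and p :: "'s \<Rightarrow> 'a::euclidean_space \<Rightarrow> real"
  assumes m: "m \<ge> 1"
    and S: "finite S" "card S = 2 ^ m"
    and mu: "bij_betw \<mu> (bitvecs m) S"
    and dens: "\<forall>s\<in>S. p s \<in> borel_measurable lborel \<and> (\<forall>y. p s y \<ge> 0)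
                 \<and> integrable lborel (p s) \<and> integral\<^sup>L lborel (p s) = 1"
    and qpos: "\<forall>j<m. \<forall>y. qbit m S \<mu> p j 1 y > 0 \<and> qbit m S \<mu> p j (-1) y > 0"
    and A3: "\<forall>j<m. smooth_cdf (Psi m S \<mu> p j)"
begin

abbreviation "B \<equiv> bitvecs m"
abbreviation "q \<equiv> qbit m S \<mu> p"
abbreviation "T \<equiv> llr m S \<mu> p"

definition rho :: "'a \<Rightarrow> real" where
  "rho y = (1/2)^m * (\<Sum>b\<in>B. p (\<mu> b) y)"

lemma finB: "finite B"
  unfolding bitvecs_def by (auto intro!: finite_PiE)

lemma cardB: "card B = 2^m"
  unfolding bitvecs_def by (simp add: card_PiE numeral_2_eq_2)

lemma B_val: "b \<in> B \<Longrightarrow> j < m \<Longrightarrow> b j = 1 \<or> b j = -1"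
  unfolding bitvecs_def by (auto simp: PiE_iff)

lemma muS: "b \<in> B \<Longrightarrow> \<mu> b \<in> S"
  using mu by (auto simp: bij_betw_def)

lemma lab: "b \<in> B \<Longrightarrow> lab_bit m \<mu> (\<mu> b) j = b j"
  using mu unfolding lab_bit_def bij_betw_def by (simp add: inv_into_f_f)

lemma pmeas[measurable]: "b \<in> B \<Longrightarrow> p (\<mu> b) \<in> borel_measurable lborel"
  using dens muS by blast

lemma pnn: "b \<in> B \<Longrightarrow> p (\<mu> b) y \<ge> 0"
  using dens muS by blast

lemma pint: "b \<in> B \<Longrightarrow> integrable lborel (p (\<mu> b))"
  using dens muS by blast

lemma pint1: "b \<in> B \<Longrightarrow> integral\<^sup>L lborel (p (\<mu> b)) = 1"
  using dens muS by blast

lemma qB: "q j \<beta> y = (1/2)^(m-1) * (\<Sum>b\<in>{b\<in>B. b j = \<beta>}. p (\<mu> b) y)"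
proof -
  have inj: "inj_on \<mu> {b\<in>B. b j = \<beta>}"
    using mu unfolding bij_betw_def by (auto intro: inj_on_subset)
  have im: "{s\<in>S. lab_bit m \<mu> s j = \<beta>} = \<mu> ` {b\<in>B. b j = \<beta>}"
  proof
    show "{s \<in> S. lab_bit m \<mu> s j = \<beta>} \<subseteq> \<mu> ` {b \<in> B. b j = \<beta>}"
    proof
      fix s assume s: "s \<in> {s \<in> S. lab_bit m \<mu> s j = \<beta>}"
      then obtain b where b: "b \<in> B" "s = \<mu> b" using mu unfolding bij_betw_def by auto
      then show "s \<in> \<mu> ` {b \<in> B. b j = \<beta>}" using s lab[OF b(1)] by auto
    qed
  qed (auto simp: lab muS)
  show ?thesis unfolding qbit_def im by (simp add: sum.reindex[OF inj])
qed

lemma q_sum: "j < m \<Longrightarrow> q j 1 y + q j (-1) y = 2 * rho y"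
proof -
  assume j: "j < m"
  have eqB: "{b\<in>B. b j = 1} \<union> {b\<in>B. b j = -1} = B" using B_val[OF _ j] by auto
  have "(\<Sum>b\<in>{b\<in>B. b j = 1} \<union> {b\<in>B. b j = -1}. p (\<mu> b) y) = (\<Sum>b\<in>{b\<in>B. b j = 1}. p (\<mu> b) y) + (\<Sum>b\<in>{b\<in>B. b j = -1}. p (\<mu> b) y)"
    by (rule sum.union_disjoint) (auto intro: finite_subset[OF _ finB])
  then have sB: "(\<Sum>b\<in>B. p (\<mu> b) y) = (\<Sum>b\<in>{b\<in>B. b j = 1}. p (\<mu> b) y) + (\<Sum>b\<in>{b\<in>B. b j = -1}. p (\<mu> b) y)"
    by (simp only: eqB)
  have half: "(1/2::real)^m = (1/2) * (1/2)^(m-1)" using m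
    by (metis Suc_diff_le diff_Suc_1 power_Suc)
  show ?thesis unfolding qB rho_def sB half by (simp add: distrib_left)
qed

lemma rho_meas[measurable]: "rho \<in> borel_measurable lborel"
  unfolding rho_def by measurable

lemma q_meas[measurable]: "q j \<beta> \<in> borel_measurable lborel"
  unfolding qB by measurable

lemma T_meas[measurable]: "T j \<in> borel_measurable lborel"
  unfolding llr_def by measurable

lemma rho_nn: "rho y \<ge> 0"
  unfolding rho_def by (auto intro!: mult_nonneg_nonneg sum_nonneg pnn)

lemma q_nn: "q j \<beta> y \<ge> 0"
  unfolding qB by (auto intro!: mult_nonneg_nonneg sum_nonneg pnn)

lemma rho_int: "integrable lborel rho"
  unfolding rho_def by (auto intro!: pint)

lemma q_int: "integrable lborel (q j \<beta>)"
  unfolding qB by (auto intro!: pint)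

lemma rho_int1: "integral\<^sup>L lborel rho = 1"
proof -
  have e: "rho = (\<lambda>y. (1/2)^m * (\<Sum>b\<in>B. p (\<mu> b) y))" by (rule ext, rule rho_def)
  have "integral\<^sup>L lborel (\<lambda>y. (\<Sum>b\<in>B. p (\<mu> b) y)) = (\<Sum>b\<in>B. integral\<^sup>L lborel (p (\<mu> b)))"
    by (rule Bochner_Integration.integral_sum) (rule pint)
  also have "\<dots> = (\<Sum>b\<in>B. 1)" by (rule sum.cong) (auto simp: pint1)
  also have "\<dots> = 2^m" by (simp add: cardB)
  finally have "integral\<^sup>L lborel rho = (1/2)^m * 2^m" unfolding e by (simp only: integral_mult_right_zero)
  also have "\<dots> = ((1/2) * 2)^m" by (rule power_mult_distrib[symmetric])
  also have "\<dots> = 1" by simp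
  finally show ?thesis .
qed

lemma rho_nn1: "(\<integral>\<^sup>+ y. ennreal (rho y) \<partial>lborel) = 1"
  by (subst nn_integral_eq_integral[OF rho_int]) (auto simp: rho_nn rho_int1)

end


context orb begin

abbreviation "Ps \<equiv> Psi m S \<mu> p"

lemma Psi_real: "j < m \<Longrightarrow> Ps j t = integral\<^sup>L lborel (\<lambda>v. indicator {v. \<bar>T j v\<bar> \<le> t} v * rho v)"
proof -
  assume j: "j < m"
  let ?A = "{v. \<bar>T j v\<bar> \<le> t}"
  have A: "?A \<in> sets lborel" by measurable
  have i1: "integrable lborel (\<lambda>v. indicator ?A v * q j 1 v)"
    using integrable_mult_indicator[OF A q_int[of j 1]] by simp
  have i2: "integrable lborel (\<lambda>v. indicator ?A v * q j (-1) v)"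
    using integrable_mult_indicator[OF A q_int[of j "-1"]] by simp
  have "Ps j t = 1/2 * integral\<^sup>L lborel (\<lambda>v. indicator ?A v * q j 1 v)
      + 1/2 * integral\<^sup>L lborel (\<lambda>v. indicator ?A v * q j (-1) v)"
    unfolding Psi_def set_lebesgue_integral_def by simp
  also have "\<dots> = integral\<^sup>L lborel (\<lambda>v. 1/2 * (indicator ?A v * q j 1 v) + 1/2 * (indicator ?A v * q j (-1) v))"
    using i1 i2 by simp
  also have "\<dots> = integral\<^sup>L lborel (\<lambda>v. indicator ?A v * rho v)"
  proof (rule Bochner_Integration.integral_cong[OF refl])
    fix v
    have rq: "rho v = (q j 1 v + q j (-1) v) / 2" using q_sum[OF j, of v] by simp
    show "1/2 * (indicator ?A v * q j 1 v) + 1/2 * (indicator ?A v * q j (-1) v) = indicator ?A v * rho v"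
      unfolding rq by (simp add: algebra_simps)
  qed
  finally show ?thesis .
qed

lemma ind_rho_int: "A \<in> sets lborel \<Longrightarrow> integrable lborel (\<lambda>v. indicator A v * rho v)"
  using integrable_mult_indicator[of A lborel rho] rho_int by simp

lemma Psi_nn: "j < m \<Longrightarrow> ennreal (Ps j t) = (\<integral>\<^sup>+ v. ennreal (indicator {v. \<bar>T j v\<bar> \<le> t} v * rho v) \<partial>lborel)"
  apply (subst nn_integral_eq_integral)
    apply (rule ind_rho_int, measurable)
   apply (auto simp: rho_nn Psi_real)
  done

lemma Psi_ge0: "j < m \<Longrightarrow> Ps j t \<ge> 0"
  by (auto simp: Psi_real rho_nn)

lemma nn_le_rho: "(\<integral>\<^sup>+ v. ennreal (f v * rho v) \<partial>lborel) \<le> 1" if "\<And>v. f v \<le> 1" "\<And>v. f v \<ge> 0"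
proof -
  have "(\<integral>\<^sup>+ v. ennreal (f v * rho v) \<partial>lborel) \<le> (\<integral>\<^sup>+ v. ennreal (rho v) \<partial>lborel)"
    apply (rule nn_integral_mono)
    using that rho_nn by (simp add: mult_left_le_one_le)
  then show ?thesis using rho_nn1 by simp
qed

lemma Psi_le1: "j < m \<Longrightarrow> Ps j t \<le> 1"
proof -
  assume j: "j < m"
  have "ennreal (Ps j t) \<le> 1" unfolding Psi_nn[OF j] by (rule nn_le_rho) auto
  then show ?thesis by (simp add: ennreal_le_1)
qed

lemma Psi_mono: "j < m \<Longrightarrow> s \<le> t \<Longrightarrow> Ps j s \<le> Ps j t"
proof -
  assume j: "j < m" and st: "s \<le> t"
  have "ennreal (Ps j s) \<le> ennreal (Ps j t)" unfolding Psi_nn[OF j]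
    by (rule nn_integral_mono) (use st rho_nn in \<open>auto simp: indicator_def\<close>)
  then show ?thesis using Psi_ge0[OF j, of t] by simp
qed

lemma Psi0: "j < m \<Longrightarrow> Ps j 0 = 0"
proof (rule ccontr)
  assume j: "j < m" and ne: "Ps j 0 \<noteq> 0"
  have "Ps j 0 \<ge> 0" by (rule Psi_ge0[OF j])
  then have pos: "Ps j 0 > 0" using ne by linarith
  from A3 j obtain G where G: "\<forall>u\<in>{0<..<1}. G u > 0 \<and> Ps j (G u) = u"
    unfolding smooth_cdf_def by blast
  let ?u = "Ps j 0 / 2"
  have "?u \<in> {0<..<1}" using pos Psi_le1[OF j, of 0] by auto
  then have "G ?u > 0" "Ps j (G ?u) = ?u" using G by auto
  then have "Ps j 0 \<le> ?u" using Psi_mono[OF j, of 0 "G ?u"] by auto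
  then show False using pos by simp
qed

lemma Psi_cont: "j < m \<Longrightarrow> t > 0 \<Longrightarrow> isCont (Ps j) t"
proof -
  assume j: "j < m" and t: "t > 0"
  from A3 j have "smooth_on {0<..} (Ps j)" unfolding smooth_cdf_def by blast
  then have "((deriv ^^ 0) (Ps j)) differentiable (at t)" unfolding smooth_on_def using t by blast
  then have "Ps j differentiable (at t)" by simp
  then show ?thesis by (rule differentiable_imp_continuous_within)
qed

lemma Psi_cmp:
  assumes l: "l < m" and t: "t \<ge> 0"
  shows "(\<integral>\<^sup>+ v. ennreal ((if \<bar>T l v\<bar> < t \<or> (\<bar>T l v\<bar> = t \<and> \<beta>) then 1 else 0) * rho v) \<partial>lborel)
     = ennreal (Ps l t)"
proof (rule antisym)
  let ?X = "(\<integral>\<^sup>+ v. ennreal ((if \<bar>T l v\<bar> < t \<or> (\<bar>T l v\<bar> = t \<and> \<beta>) then 1 else 0) * rho v) \<partial>lborel)"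
  show "?X \<le> ennreal (Ps l t)" unfolding Psi_nn[OF l]
    by (rule nn_integral_mono) (auto simp: rho_nn indicator_def)
  have low: "ennreal (Ps l s) \<le> ?X" if "s < t" for s unfolding Psi_nn[OF l]
    by (rule nn_integral_mono) (use that rho_nn in \<open>auto simp: indicator_def\<close>)
  have Xle: "?X \<le> 1" by (rule nn_le_rho) auto
  define x where "x = enn2real ?X"
  have x: "?X = ennreal x" "x \<ge> 0" unfolding x_def using Xle
    by (auto simp: ennreal_enn2real_if top_unique)
  show "ennreal (Ps l t) \<le> ?X"
  proof (cases "t = 0")
    case True then show ?thesis using Psi0[OF l] by simp
  next
    case False
    then have tp: "t > 0" using t by simp
    have "((Ps l) \<longlongrightarrow> Ps l t) (at_left t)"
      using Psi_cont[OF l tp] by (simp add: isCont_def filterlim_at_split)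
    moreover have "eventually (\<lambda>s. Ps l s \<le> x) (at_left t)"
    proof -
      have "eventually (\<lambda>s. s \<in> {t-1<..<t}) (at_left t)" by (rule eventually_at_left_real) simp
      then have "eventually (\<lambda>s. s < t) (at_left t)" by (rule eventually_mono) auto
      then show ?thesis
      proof (rule eventually_mono)
        fix s assume "s < t"
        then have "ennreal (Ps l s) \<le> ennreal x" using low x by simp
        then show "Ps l s \<le> x" using x(2) by simp
      qed
    qed
    ultimately have "Ps l t \<le> x" by (rule tendsto_upperbound) simp
    then show ?thesis using x by simp
  qed
qed

end


context orb begin

definition X :: "nat \<Rightarrow> (nat \<Rightarrow> nat \<Rightarrow> real) set" where
  "X N = PiE {..<N} (\<lambda>_. B)"

abbreviation PM :: "nat \<Rightarrow> (nat \<Rightarrow> 'a) measure" where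
  "PM N \<equiv> PiM {..<N} (\<lambda>_. lborel)"

definition Z :: "nat \<Rightarrow> (nat \<Rightarrow> nat \<Rightarrow> real) \<Rightarrow> (nat \<Rightarrow> 'a) \<Rightarrow> real" where
  "Z N x y = (\<Prod>n<N. p (\<mu> (x n)) (y n))"

definition EE :: "nat \<Rightarrow> ((nat \<Rightarrow> nat \<Rightarrow> real) \<Rightarrow> (nat \<Rightarrow> 'a) \<Rightarrow> real) \<Rightarrow> real" where
  "EE N f = (\<Sum>x\<in>X N. (1/2)^(m*N) * integral\<^sup>L (PM N) (\<lambda>y. f x y * Z N x y))"

lemma X_B: "x \<in> X N \<Longrightarrow> n < N \<Longrightarrow> x n \<in> B"
  unfolding X_def by auto

lemma finX: "finite (X N)"
  unfolding X_def by (auto intro!: finite_PiE finB)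

lemma cardX: "card (X N) = 2^(m*N)"
  unfolding X_def by (simp add: card_PiE cardB power_mult)

lemma Z_meas[measurable]: "x \<in> X N \<Longrightarrow> Z N x \<in> borel_measurable (PM N)"
proof -
  assume x: "x \<in> X N"
  have "(\<lambda>y. p (\<mu> (x n)) (y n)) \<in> borel_measurable (PM N)" if "n < N" for n
    using measurable_compose[OF measurable_component_singleton[of n "{..<N}" "\<lambda>_. lborel"] pmeas[OF X_B[OF x that]]] that by simp
  then show ?thesis unfolding Z_def[abs_def] by (auto intro!: borel_measurable_prod)
qed

lemma Z_nn: "x \<in> X N \<Longrightarrow> Z N x y \<ge> 0"
  unfolding Z_def by (auto intro!: prod_nonneg pnn X_B)

lemma p_nn1: "b \<in> B \<Longrightarrow> (\<integral>\<^sup>+ y. ennreal (p (\<mu> b) y) \<partial>lborel) = 1"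
  by (subst nn_integral_eq_integral[OF pint]) (auto simp: pnn pint1)

lemma Z_nn1: "x \<in> X N \<Longrightarrow> (\<integral>\<^sup>+ y. ennreal (Z N x y) \<partial>PM N) = 1"
proof -
  assume x: "x \<in> X N"
  interpret product_sigma_finite "\<lambda>_. lborel :: 'a measure" by standard
  have "(\<integral>\<^sup>+ y. ennreal (Z N x y) \<partial>PM N) = (\<integral>\<^sup>+ y. (\<Prod>n<N. ennreal (p (\<mu> (x n)) (y n))) \<partial>PM N)"
    unfolding Z_def by (rule nn_integral_cong) (subst prod_ennreal, auto simp: pnn X_B[OF x])
  also have "\<dots> = (\<Prod>n<N. \<integral>\<^sup>+ y. ennreal (p (\<mu> (x n)) y) \<partial>lborel)"
  proof (rule product_nn_integral_prod)
    fix n assume "n \<in> {..<N}"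
    then have "p (\<mu> (x n)) \<in> borel_measurable borel" using pmeas[OF X_B[OF x]] by simp
    then show "(\<lambda>y. ennreal (p (\<mu> (x n)) y)) \<in> borel_measurable lborel" by simp
  qed simp
  also have "\<dots> = 1" by (auto intro!: prod.neutral simp: p_nn1 X_B[OF x])
  finally show ?thesis .
qed

lemma Z_int: "x \<in> X N \<Longrightarrow> integrable (PM N) (Z N x)"
  by (rule integrableI_nonneg) (auto simp: Z_nn Z_nn1)

lemma Z_int1: "x \<in> X N \<Longrightarrow> integral\<^sup>L (PM N) (Z N x) = 1"
  using nn_integral_eq_integral[OF Z_int, of x N] Z_nn1 Z_nn by simp

definition intg :: "nat \<Rightarrow> ((nat \<Rightarrow> nat \<Rightarrow> real) \<Rightarrow> (nat \<Rightarrow> 'a) \<Rightarrow> real) \<Rightarrow> bool" where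
  "intg N f \<longleftrightarrow> (\<forall>x\<in>X N. integrable (PM N) (\<lambda>y. f x y * Z N x y))"

lemma intg_bdd:
  assumes "\<And>x. x \<in> X N \<Longrightarrow> f x \<in> borel_measurable (PM N)"
    and "\<And>x y. x \<in> X N \<Longrightarrow> \<bar>f x y\<bar> \<le> 1"
  shows "intg N f"
  unfolding intg_def
proof
  fix x assume x: "x \<in> X N"
  show "integrable (PM N) (\<lambda>y. f x y * Z N x y)"
    apply (rule Bochner_Integration.integrable_bound[OF Z_int[OF x]])
    using assms(1)[OF x] x apply measurable
    using assms(2)[OF x] Z_nn[OF x]
    by (auto simp: abs_mult intro!: mult_left_le_one_le)
qed

lemma intg_add: "intg N f \<Longrightarrow> intg N g \<Longrightarrow> intg N (\<lambda>x y. f x y + g x y)"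
  unfolding intg_def by (auto simp: distrib_right)

lemma intg_cmult: "intg N f \<Longrightarrow> intg N (\<lambda>x y. c * f x y)"
  unfolding intg_def by (auto simp: mult.assoc)

lemma intg_sum: "finite I \<Longrightarrow> (\<And>i. i \<in> I \<Longrightarrow> intg N (f i)) \<Longrightarrow> intg N (\<lambda>x y. \<Sum>i\<in>I. f i x y)"
  unfolding intg_def by (auto simp: sum_distrib_right)

lemma EE_add: "intg N f \<Longrightarrow> intg N g \<Longrightarrow> EE N (\<lambda>x y. f x y + g x y) = EE N f + EE N g"
  unfolding intg_def EE_def
  by (simp add: distrib_right sum.distrib[symmetric] distrib_left cong: sum.cong)

lemma EE_cmult: "EE N (\<lambda>x y. c * f x y) = c * EE N f"
  unfolding EE_def by (simp add: sum_distrib_left mult.assoc mult.left_commute)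

lemma EE_sum: "finite I \<Longrightarrow> (\<And>i. i \<in> I \<Longrightarrow> intg N (f i)) \<Longrightarrow> EE N (\<lambda>x y. \<Sum>i\<in>I. f i x y) = (\<Sum>i\<in>I. EE N (f i))"
proof (induction I rule: finite_induct)
  case empty then show ?case by (simp add: EE_def)
next
  case (insert a I)
  have "EE N (\<lambda>x y. \<Sum>i\<in>insert a I. f i x y) = EE N (\<lambda>x y. f a x y + (\<Sum>i\<in>I. f i x y))"
    using insert by simp
  also have "\<dots> = EE N (f a) + EE N (\<lambda>x y. \<Sum>i\<in>I. f i x y)"
    by (rule EE_add) (use insert in \<open>auto intro!: intg_sum\<close>)
  finally show ?case using insert by simp
qed

lemma EE_one: "EE N (\<lambda>x y. 1) = 1"
proof -
  have "EE N (\<lambda>x y. 1) = (\<Sum>x\<in>X N. (1/2)^(m*N))"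
    unfolding EE_def by (rule sum.cong) (auto simp: Z_int1)
  also have "\<dots> = (1/2)^(m*N) * 2^(m*N)" by (simp add: cardX)
  also have "\<dots> = ((1/2) * 2)^(m*N)" by (rule power_mult_distrib[symmetric])
  finally show ?thesis by simp
qed

lemma EE_bounds:
  assumes "\<And>x. x \<in> X N \<Longrightarrow> f x \<in> borel_measurable (PM N)"
    and "\<And>x y. x \<in> X N \<Longrightarrow> f x y \<ge> 0" "\<And>x y. x \<in> X N \<Longrightarrow> f x y \<le> 1"
  shows "EE N f \<ge> 0" "EE N f \<le> 1"
proof -
  have i: "integrable (PM N) (\<lambda>y. f x y * Z N x y)" if "x \<in> X N" for x
    using intg_bdd[of N f] assms that unfolding intg_def by force
  show "EE N f \<ge> 0" unfolding EE_def
    by (auto intro!: sum_nonneg mult_nonneg_nonneg Bochner_Integration.integral_nonneg assms Z_nn)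
  have "EE N f \<le> EE N (\<lambda>x y. 1)" unfolding EE_def
    apply (rule sum_mono)
    apply (rule mult_left_mono)
     apply (rule integral_mono[OF i])
      apply (simp_all add: Z_int)
    using assms Z_nn by (auto intro: mult_left_le_one_le)
  then show "EE N f \<le> 1" by (simp add: EE_one)
qed

end


context orb begin

lemma marg:
  fixes H :: "'a \<Rightarrow> 'a \<Rightarrow> real"
  assumes I: "finite I" "i \<in> I" "k \<in> I" "i \<noteq> k"
    and Hm: "case_prod H \<in> borel_measurable (lborel \<Otimes>\<^sub>M lborel)" and Hnn: "\<And>u v. H u v \<ge> 0"
  shows "(\<integral>\<^sup>+ y. ennreal (H (y i) (y k) * (\<Prod>n\<in>I-{i,k}. rho (y n))) \<partial>PiM I (\<lambda>_. lborel))
       = (\<integral>\<^sup>+ u. \<integral>\<^sup>+ v. ennreal (H u v) \<partial>lborel \<partial>lborel)"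
proof -
  interpret product_sigma_finite "\<lambda>_. lborel :: 'a measure" by standard
  define J where "J = I - {i,k}"
  have IJ: "I = insert i (insert k J)" "finite J" "i \<notin> insert k J" "k \<notin> J" "finite (insert k J)"
    using I unfolding J_def by auto
  define f where "f = (\<lambda>y. ennreal (H (y i) (y k) * (\<Prod>n\<in>J. rho (y n))))"
  have fm: "f \<in> borel_measurable (PiM (insert i (insert k J)) (\<lambda>_. lborel))"
  proof -
    note Hm[measurable]
    have "(\<lambda>y. H (y i) (y k)) \<in> borel_measurable (PiM (insert i (insert k J)) (\<lambda>_. lborel))"
      by measurable
    moreover have "(\<lambda>y. \<Prod>n\<in>J. rho (y n)) \<in> borel_measurable (PiM (insert i (insert k J)) (\<lambda>_. lborel))"
    proof (rule borel_measurable_prod)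
      fix n assume "n \<in> J"
      then show "(\<lambda>y. rho (y n)) \<in> borel_measurable (PiM (insert i (insert k J)) (\<lambda>_. lborel))"
        using measurable_compose[OF measurable_component_singleton[of n "insert i (insert k J)" "\<lambda>_. lborel"] rho_meas] by simp
    qed
    ultimately show ?thesis unfolding f_def by measurable
  qed
  have "(\<integral>\<^sup>+ y. ennreal (H (y i) (y k) * (\<Prod>n\<in>I-{i,k}. rho (y n))) \<partial>PiM I (\<lambda>_. lborel))
      = integral\<^sup>N (PiM (insert i (insert k J)) (\<lambda>_. lborel)) f"
    unfolding f_def J_def using IJ(1) J_def by simp
  also have "\<dots> = (\<integral>\<^sup>+ u. (\<integral>\<^sup>+ x. f (x(i := u)) \<partial>PiM (insert k J) (\<lambda>_. lborel)) \<partial>lborel)"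
    by (rule product_nn_integral_insert_rev[OF IJ(5) IJ(3) fm])
  also have "\<dots> = (\<integral>\<^sup>+ u. \<integral>\<^sup>+ v. ennreal (H u v) \<partial>lborel \<partial>lborel)"
  proof (rule nn_integral_cong)
    fix u :: 'a
    have gm: "(\<lambda>x. f (x(i := u))) \<in> borel_measurable (PiM (insert k J) (\<lambda>_. lborel))"
    proof -
      have upd: "(\<lambda>x. x(i:=u)) \<in> measurable (PiM (insert k J) (\<lambda>_. lborel)) (PiM (insert i (insert k J)) (\<lambda>_. lborel))"
        by (rule measurable_fun_upd[where J="insert k J"]) auto
      show ?thesis using measurable_compose[OF upd fm] by simp
    qed
    have "(\<integral>\<^sup>+ x. f (x(i := u)) \<partial>PiM (insert k J) (\<lambda>_. lborel))
        = (\<integral>\<^sup>+ v. (\<integral>\<^sup>+ z. f (z(k := v, i := u)) \<partial>PiM J (\<lambda>_. lborel)) \<partial>lborel)"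
      using product_nn_integral_insert_rev[OF IJ(2) IJ(4) gm] by simp
    also have "\<dots> = (\<integral>\<^sup>+ v. ennreal (H u v) \<partial>lborel)"
    proof (rule nn_integral_cong)
      fix v :: 'a
      have eq: "f (z(k := v, i := u)) = ennreal (H u v) * (\<Prod>n\<in>J. ennreal (rho (z n)))" for z
      proof -
        have "(\<Prod>n\<in>J. rho ((z(k := v, i := u)) n)) = (\<Prod>n\<in>J. rho (z n))"
          using IJ by (intro prod.cong) auto
        then show ?thesis unfolding f_def using I(4) Hnn rho_nn
          by (simp add: ennreal_mult prod_ennreal prod_nonneg)
      qed
      have pm: "(\<lambda>z. \<Prod>n\<in>J. ennreal (rho (z n))) \<in> borel_measurable (PiM J (\<lambda>_. lborel))"
      proof (rule borel_measurable_prod_ennreal)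
        fix n assume "n \<in> J"
        then show "(\<lambda>y. ennreal (rho (y n))) \<in> borel_measurable (PiM J (\<lambda>_. lborel))"
          using measurable_compose[OF measurable_component_singleton[of n J "\<lambda>_. lborel"] rho_meas] by simp
      qed
      have "(\<integral>\<^sup>+ z. f (z(k := v, i := u)) \<partial>PiM J (\<lambda>_. lborel))
          = ennreal (H u v) * (\<integral>\<^sup>+ z. (\<Prod>n\<in>J. ennreal (rho (z n))) \<partial>PiM J (\<lambda>_. lborel))"
        unfolding eq by (rule nn_integral_cmult[OF pm])
      also have "(\<integral>\<^sup>+ z. (\<Prod>n\<in>J. ennreal (rho (z n))) \<partial>PiM J (\<lambda>_. lborel)) = (\<Prod>n\<in>J. \<integral>\<^sup>+ y. ennreal (rho y) \<partial>lborel)"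
        by (rule product_nn_integral_prod[OF IJ(2)]) auto
      also have "\<dots> = 1" by (simp add: rho_nn1)
      finally show "(\<integral>\<^sup>+ z. f (z(k := v, i := u)) \<partial>PiM J (\<lambda>_. lborel)) = ennreal (H u v)" by (simp only: mult_1_right)
    qed
    finally show "(\<integral>\<^sup>+ x. f (x(i := u)) \<partial>PiM (insert k J) (\<lambda>_. lborel)) = (\<integral>\<^sup>+ v. ennreal (H u v) \<partial>lborel)" .
  qed
  finally show ?thesis .
qed

end


context orb begin

lemma pw_sum:
  assumes ik: "i < N" "k < N" "i \<noteq> k"
  shows "(\<Sum>x\<in>X N. (1/2)^(m*N) * (g (x i) (y i) (y k) * Z N x y))
     = ((\<Sum>b\<in>B. (1/2)^m * g b (y i) (y k) * p (\<mu> b) (y i)) * rho (y k)) * (\<Prod>n\<in>{..<N}-{i,k}. rho (y n))"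
proof -
  define h where "h n b = (1/2)^m * (if n = i then g b (y i) (y k) else 1) * p (\<mu> b) (y n)" for n b
  have a: "(1/2)^(m*N) * (g (x i) (y i) (y k) * Z N x y) = (\<Prod>n<N. h n (x n))" for x
  proof -
    have "(\<Prod>n<N. h n (x n)) = (\<Prod>n<N. (1/2::real)^m) * (\<Prod>n<N. (if n = i then g (x n) (y i) (y k) else 1)) * (\<Prod>n<N. p (\<mu> (x n)) (y n))"
      unfolding h_def by (simp only: prod.distrib)
    also have "\<dots> = (1/2)^(m*N) * g (x i) (y i) (y k) * Z N x y"
      by (simp only: prod_constant card_lessThan prod.delta[OF finite_lessThan] Z_def power_mult) (simp add: ik)
    finally show ?thesis by simp
  qed
  have "(\<Sum>x\<in>X N. (1/2)^(m*N) * (g (x i) (y i) (y k) * Z N x y)) = (\<Sum>x\<in>X N. \<Prod>n<N. h n (x n))"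
    by (simp add: a)
  also have "\<dots> = (\<Prod>n<N. \<Sum>b\<in>B. h n b)"
    unfolding X_def by (rule prod_sum_PiE[symmetric]) (auto simp: finB)
  also have "\<dots> = (\<Sum>b\<in>B. h i b) * (\<Prod>n\<in>{..<N}-{i}. \<Sum>b\<in>B. h n b)"
    using ik by (subst prod.remove[of _ i]) auto
  also have "(\<Prod>n\<in>{..<N}-{i}. \<Sum>b\<in>B. h n b) = (\<Prod>n\<in>{..<N}-{i}. rho (y n))"
    by (rule prod.cong) (auto simp: h_def rho_def sum_distrib_left)
  also have "\<dots> = rho (y k) * (\<Prod>n\<in>{..<N}-{i}-{k}. rho (y n))"
    using ik by (subst prod.remove[of _ k]) auto
  also have "{..<N}-{i}-{k} = {..<N}-{i,k}" by auto
  also have "(\<Sum>b\<in>B. h i b) = (\<Sum>b\<in>B. (1/2)^m * g b (y i) (y k) * p (\<mu> b) (y i))"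
    by (simp add: h_def)
  finally show ?thesis by (simp add: mult.assoc)
qed

lemma tcl:
  assumes ik: "i < N" "k < N" "i \<noteq> k"
    and gm: "\<And>b. b \<in> B \<Longrightarrow> (\<lambda>(u,v). g b u v) \<in> borel_measurable (lborel \<Otimes>\<^sub>M lborel)"
    and g0: "\<And>b u v. 0 \<le> g b u v" and g1: "\<And>b u v. g b u v \<le> 1"
  shows "EE N (\<lambda>x y. g (x i) (y i) (y k))
     = enn2real (\<integral>\<^sup>+ u. \<integral>\<^sup>+ v. ennreal ((\<Sum>b\<in>B. (1/2)^m * g b u v * p (\<mu> b) u) * rho v) \<partial>lborel \<partial>lborel)"
proof -
  define H where "H u v = (\<Sum>b\<in>B. (1/2)^m * g b u v * p (\<mu> b) u) * rho v" for u v
  have Hm[measurable]: "case_prod H \<in> borel_measurable (lborel \<Otimes>\<^sub>M lborel)"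
  proof -
    have gb: "(\<lambda>z. (1/2)^m * g b (fst z) (snd z) * p (\<mu> b) (fst z)) \<in> borel_measurable (lborel \<Otimes>\<^sub>M lborel)" if b: "b \<in> B" for b
    proof -
      have 1: "(\<lambda>z. g b (fst z) (snd z)) \<in> borel_measurable (lborel \<Otimes>\<^sub>M lborel)"
        using gm[OF b] by (simp add: split_beta')
      have 2: "(\<lambda>z. p (\<mu> b) (fst z)) \<in> borel_measurable (lborel \<Otimes>\<^sub>M lborel)"
        by (rule measurable_compose[OF measurable_fst pmeas[OF b]])
      show ?thesis using 1 2 by (intro borel_measurable_times borel_measurable_const)
    qed
    have 3: "(\<lambda>z. rho (snd z)) \<in> borel_measurable (lborel \<Otimes>\<^sub>M lborel)"
      by (rule measurable_compose[OF measurable_snd rho_meas])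
    have "(\<lambda>z. (\<Sum>b\<in>B. (1/2)^m * g b (fst z) (snd z) * p (\<mu> b) (fst z)) * rho (snd z)) \<in> borel_measurable (lborel \<Otimes>\<^sub>M lborel)"
      apply (rule borel_measurable_times)
       apply (rule borel_measurable_sum)
       apply (erule gb)
      apply (rule 3)
      done
    then show ?thesis unfolding H_def split_beta' .
  qed
  have Hnn: "H u v \<ge> 0" for u v
    unfolding H_def by (auto intro!: mult_nonneg_nonneg sum_nonneg g0 pnn rho_nn)
  have ci: "(\<lambda>y. y i) \<in> measurable (PM N) lborel" and ck: "(\<lambda>y. y k) \<in> measurable (PM N) lborel"
    using measurable_component_singleton[of i "{..<N}" "\<lambda>_. lborel"]
      measurable_component_singleton[of k "{..<N}" "\<lambda>_. lborel"] ik by auto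
  have pm: "(\<lambda>y. (y i, y k)) \<in> measurable (PM N) (lborel \<Otimes>\<^sub>M lborel)"
    by (rule measurable_Pair[OF ci ck])
  have Gm: "(\<lambda>y. g (x i) (y i) (y k)) \<in> borel_measurable (PM N)" if x: "x \<in> X N" for x
    using measurable_compose[OF pm gm[OF X_B[OF x ik(1)]]] by simp
  have Hm2: "(\<lambda>y. H (y i) (y k)) \<in> borel_measurable (PM N)"
    using measurable_compose[OF pm Hm] by simp
  have ig: "integrable (PM N) (\<lambda>y. g (x i) (y i) (y k) * Z N x y)" if x: "x \<in> X N" for x
  proof -
    have "intg N (\<lambda>x y. g (x i) (y i) (y k))"
    proof (rule intg_bdd)
      fix x y assume "x \<in> X N"
      show "\<bar>g (x i) (y i) (y k)\<bar> \<le> 1" using g0 g1 abs_of_nonneg by metis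
    qed (rule Gm)
    then show ?thesis using x unfolding intg_def by blast
  qed
  have "EE N (\<lambda>x y. g (x i) (y i) (y k)) = integral\<^sup>L (PM N) (\<lambda>y. \<Sum>x\<in>X N. (1/2)^(m*N) * (g (x i) (y i) (y k) * Z N x y))"
    unfolding EE_def
    by (subst Bochner_Integration.integral_sum) (auto intro: ig)
  also have "\<dots> = integral\<^sup>L (PM N) (\<lambda>y. H (y i) (y k) * (\<Prod>n\<in>{..<N}-{i,k}. rho (y n)))"
    by (rule Bochner_Integration.integral_cong[OF refl]) (subst pw_sum[OF ik], simp add: H_def)
  also have "\<dots> = enn2real (\<integral>\<^sup>+ y. ennreal (H (y i) (y k) * (\<Prod>n\<in>{..<N}-{i,k}. rho (y n))) \<partial>PM N)"
  proof (rule integral_eq_nn_integral)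
    have "(\<lambda>y. \<Prod>n\<in>{..<N}-{i,k}. rho (y n)) \<in> borel_measurable (PM N)"
    proof (rule borel_measurable_prod)
      fix n assume "n \<in> {..<N}-{i,k}"
      then show "(\<lambda>y. rho (y n)) \<in> borel_measurable (PM N)"
        using measurable_compose[OF measurable_component_singleton[of n "{..<N}" "\<lambda>_. lborel"] rho_meas] by simp
    qed
    then show "(\<lambda>y. H (y i) (y k) * (\<Prod>n\<in>{..<N}-{i,k}. rho (y n))) \<in> borel_measurable (PM N)"
      using Hm2 by measurable
    show "AE y in PM N. 0 \<le> H (y i) (y k) * (\<Prod>n\<in>{..<N}-{i,k}. rho (y n))"
      by (auto intro!: mult_nonneg_nonneg prod_nonneg Hnn rho_nn)
  qed
  also have "\<dots> = enn2real (\<integral>\<^sup>+ u. \<integral>\<^sup>+ v. ennreal (H u v) \<partial>lborel \<partial>lborel)"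
    using marg[of "{..<N}" i k H] ik Hnn by simp
  finally show ?thesis unfolding H_def .
qed

end


context orb begin

definition errf :: "(nat \<Rightarrow> real) \<Rightarrow> nat \<Rightarrow> 'a \<Rightarrow> real" where
  "errf b j u = (if sgnb (T j u) * b j < 0 then 1 else 0)"

definition cmpf :: "bool \<Rightarrow> nat \<Rightarrow> nat \<Rightarrow> 'a \<Rightarrow> 'a \<Rightarrow> real" where
  "cmpf \<beta> l j v u = (if \<bar>T l v\<bar> < \<bar>T j u\<bar> \<or> (\<bar>T l v\<bar> = \<bar>T j u\<bar> \<and> \<beta>) then 1 else 0)"

definition e :: "nat \<Rightarrow> 'a \<Rightarrow> real" where
  "e j u = (\<Sum>b\<in>B. (1/2)^m * errf b j u * p (\<mu> b) u)"

lemma errf_meas[measurable]: "(\<lambda>u. errf b j u) \<in> borel_measurable lborel"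
  unfolding errf_def sgnb_def by measurable

lemma errf_01: "0 \<le> errf b j u" "errf b j u \<le> 1"
  unfolding errf_def by auto

lemma cmpf_01: "0 \<le> cmpf \<beta> l j v u" "cmpf \<beta> l j v u \<le> 1"
  unfolding cmpf_def by auto

lemma g_meas: "(\<lambda>(u,v). errf b j u * cmpf \<beta> l j v u) \<in> borel_measurable (lborel \<Otimes>\<^sub>M lborel)"
  unfolding errf_def cmpf_def sgnb_def split_beta' by measurable

lemma e_meas[measurable]: "e j \<in> borel_measurable lborel"
  unfolding e_def[abs_def] by measurable

lemma e_nn: "e j u \<ge> 0"
  unfolding e_def by (auto intro!: sum_nonneg mult_nonneg_nonneg pnn errf_01)

lemma e_formula:
  assumes j: "j < m"
  shows "e j u = 1/2 * (indicator {u. q j 1 u < q j (-1) u} u * q j 1 u)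
               + 1/2 * (indicator {u. q j 1 u \<ge> q j (-1) u} u * q j (-1) u)"
proof -
  have qp: "q j 1 u > 0" "q j (-1) u > 0" using qpos j by auto
  have Tneg: "T j u < 0 \<longleftrightarrow> q j 1 u < q j (-1) u"
    using qp unfolding llr_def by (simp add: divide_less_eq)
  have e1: "errf b j u = (if q j 1 u < q j (-1) u then 1 else 0)" if "b j = 1" for b
    using that Tneg unfolding errf_def sgnb_def by auto
  have e2: "errf b j u = (if q j 1 u \<ge> q j (-1) u then 1 else 0)" if "b j = -1" for b
    using that Tneg unfolding errf_def sgnb_def by auto
  have eqB: "{b\<in>B. b j = 1} \<union> {b\<in>B. b j = -1} = B" using B_val[OF _ j] by auto
  let ?f = "\<lambda>b. (1/2)^m * errf b j u * p (\<mu> b) u"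
  have "(\<Sum>b\<in>{b\<in>B. b j = 1} \<union> {b\<in>B. b j = -1}. ?f b) = (\<Sum>b\<in>{b\<in>B. b j = 1}. ?f b) + (\<Sum>b\<in>{b\<in>B. b j = -1}. ?f b)"
    by (rule sum.union_disjoint) (auto intro: finite_subset[OF _ finB])
  then have sB: "e j u = (\<Sum>b\<in>{b\<in>B. b j = 1}. ?f b) + (\<Sum>b\<in>{b\<in>B. b j = -1}. ?f b)"
    unfolding e_def by (simp only: eqB)
  have s1: "(\<Sum>b\<in>{b\<in>B. b j = 1}. ?f b) = (1/2)^m * (if q j 1 u < q j (-1) u then 1 else 0) * (\<Sum>b\<in>{b\<in>B. b j = 1}. p (\<mu> b) u)"
    by (simp add: sum_distrib_left e1)
  have s2: "(\<Sum>b\<in>{b\<in>B. b j = -1}. ?f b) = (1/2)^m * (if q j 1 u \<ge> q j (-1) u then 1 else 0) * (\<Sum>b\<in>{b\<in>B. b j = -1}. p (\<mu> b) u)"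
    by (simp add: sum_distrib_left e2)
  have half: "(1/2::real)^m = (1/2) * (1/2)^(m-1)" using m
    by (metis Suc_diff_le diff_Suc_1 power_Suc)
  show ?thesis
    apply (unfold sB s1 s2)
    apply (unfold qB[of j 1] qB[of j "-1"] half indicator_def)
    by simp
qed

lemma e_int: "j < m \<Longrightarrow> integrable lborel (e j)"
proof -
  assume j: "j < m"
  have A1: "{u. q j 1 u < q j (-1) u} \<in> sets lborel" by measurable
  have A2: "{u. q j 1 u \<ge> q j (-1) u} \<in> sets lborel" by measurable
  have i1: "integrable lborel (\<lambda>u. indicator {u. q j 1 u < q j (-1) u} u * q j 1 u)"
    using integrable_mult_indicator[OF A1 q_int] by simp
  have i2: "integrable lborel (\<lambda>u. indicator {u. q j 1 u \<ge> q j (-1) u} u * q j (-1) u)"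
    using integrable_mult_indicator[OF A2 q_int] by simp
  have eq: "e j = (\<lambda>u. 1/2 * (indicator {u. q j 1 u < q j (-1) u} u * q j 1 u)
               + 1/2 * (indicator {u. q j 1 u \<ge> q j (-1) u} u * q j (-1) u))"
    by (rule ext) (rule e_formula[OF j])
  have "integrable lborel (\<lambda>u. 1/2 * (indicator {u. q j 1 u < q j (-1) u} u * q j 1 u)
               + 1/2 * (indicator {u. q j 1 u \<ge> q j (-1) u} u * q j (-1) u))"
    using i1 i2 by (intro Bochner_Integration.integrable_add integrable_mult_right)
  then show ?thesis by (subst eq)
qed

lemma e_le_rho: "e j u \<le> rho u"
  unfolding e_def rho_def sum_distrib_left
  by (rule sum_mono) (use errf_01 pnn in \<open>auto intro: mult_left_le_one_le mult_le_one simp: mult.assoc\<close>)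

lemma Ps_meas[measurable]: "l < m \<Longrightarrow> Ps l \<in> borel_measurable borel"
  by (rule borel_measurable_mono) (auto simp: mono_def Psi_mono)

lemma ePs_int: "j < m \<Longrightarrow> l < m \<Longrightarrow> integrable lborel (\<lambda>u. e j u * Ps l \<bar>T j u\<bar>)"
proof -
  assume j: "j < m" and l: "l < m"
  note Ps_meas[OF l, measurable]
  have m1: "(\<lambda>u. e j u * Ps l \<bar>T j u\<bar>) \<in> borel_measurable lborel" by measurable
  show ?thesis
    apply (rule Bochner_Integration.integrable_bound[OF e_int[OF j] m1])
    apply (rule AE_I2)
    apply (simp add: abs_mult e_nn Psi_ge0[OF l])
    apply (rule mult_left_le)
     apply (rule Psi_le1[OF l])
    apply (rule e_nn)
    done
qed

lemma EE_far:
  assumes ik: "i < N" "k < N" "i \<noteq> k" and j: "j < m" and l: "l < m"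
  shows "EE N (\<lambda>x y. cmpf \<beta> l j (y k) (y i) * errf (x i) j (y i)) = integral\<^sup>L lborel (\<lambda>u. e j u * Ps l \<bar>T j u\<bar>)"
proof -
  note Ps_meas[OF l, measurable]
  have "EE N (\<lambda>x y. cmpf \<beta> l j (y k) (y i) * errf (x i) j (y i)) = EE N (\<lambda>x y. (\<lambda>b u v. errf b j u * cmpf \<beta> l j v u) (x i) (y i) (y k))"
    by (simp add: mult.commute)
  also have "\<dots> = enn2real (\<integral>\<^sup>+ u. \<integral>\<^sup>+ v. ennreal ((\<Sum>b\<in>B. (1/2)^m * (errf b j u * cmpf \<beta> l j v u) * p (\<mu> b) u) * rho v) \<partial>lborel \<partial>lborel)"
    by (rule tcl[OF ik]) (auto intro: g_meas mult_nonneg_nonneg mult_le_one errf_01 cmpf_01)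
  also have "\<dots> = enn2real (\<integral>\<^sup>+ u. ennreal (e j u * Ps l \<bar>T j u\<bar>) \<partial>lborel)"
  proof (rule arg_cong[where f=enn2real], rule nn_integral_cong)
    fix u
    have eq: "(\<Sum>b\<in>B. (1/2)^m * (errf b j u * cmpf \<beta> l j v u) * p (\<mu> b) u) * rho v = e j u * (cmpf \<beta> l j v u * rho v)" for v
      unfolding e_def by (simp add: sum_distrib_right sum_distrib_left mult_ac)
    have cm: "(\<lambda>v. ennreal (cmpf \<beta> l j v u * rho v)) \<in> borel_measurable lborel"
      unfolding cmpf_def by measurable
    have "(\<integral>\<^sup>+ v. ennreal (e j u * (cmpf \<beta> l j v u * rho v)) \<partial>lborel) = ennreal (e j u) * (\<integral>\<^sup>+ v. ennreal (cmpf \<beta> l j v u * rho v) \<partial>lborel)"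
      by (subst nn_integral_cmult[OF cm, symmetric], rule nn_integral_cong)
         (simp add: ennreal_mult e_nn cmpf_01 rho_nn)
    also have "(\<integral>\<^sup>+ v. ennreal (cmpf \<beta> l j v u * rho v) \<partial>lborel) = ennreal (Ps l \<bar>T j u\<bar>)"
      unfolding cmpf_def by (rule Psi_cmp[OF l]) simp
    finally show "(\<integral>\<^sup>+ v. ennreal ((\<Sum>b\<in>B. (1/2)^m * (errf b j u * cmpf \<beta> l j v u) * p (\<mu> b) u) * rho v) \<partial>lborel) = ennreal (e j u * Ps l \<bar>T j u\<bar>)"
      unfolding eq using e_nn Psi_ge0[OF l] by (simp add: ennreal_mult)
  qed
  also have "\<dots> = integral\<^sup>L lborel (\<lambda>u. e j u * Ps l \<bar>T j u\<bar>)"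
    by (rule integral_eq_nn_integral[symmetric]) (measurable, auto intro: mult_nonneg_nonneg e_nn Psi_ge0[OF l])
  finally show ?thesis .
qed

end


context orb begin

abbreviation "Pb \<equiv> Psibar m S \<mu> p"

lemma Pb_eq: "real m * Pb t = (\<Sum>l<m. Ps l t)"
  unfolding Psibar_def using m by simp

lemma Pb0: "Pb 0 = 0"
  unfolding Psibar_def by (simp add: Psi0)

lemma Pb_ge0: "Pb t \<ge> 0"
  unfolding Psibar_def by (auto intro!: sum_nonneg divide_nonneg_nonneg Psi_ge0)

lemma Pb_le1: "Pb t \<le> 1"
proof -
  have "(\<Sum>l<m. Ps l t) \<le> (\<Sum>l<m. 1)" by (rule sum_mono) (simp add: Psi_le1)
  then show ?thesis unfolding Psibar_def using m by (simp add: divide_le_eq)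
qed

lemma Pb_meas[measurable]: "Pb \<in> borel_measurable borel"
proof -
  have "mono Pb" unfolding mono_def Psibar_def
    by (auto intro!: divide_right_mono sum_mono Psi_mono)
  then show ?thesis by (rule borel_measurable_mono)
qed

lemma sumA: "j < m \<Longrightarrow> (\<Sum>l<m. integral\<^sup>L lborel (\<lambda>u. e j u * Ps l \<bar>T j u\<bar>)) = real m * integral\<^sup>L lborel (\<lambda>u. e j u * Pb \<bar>T j u\<bar>)"
proof -
  assume j: "j < m"
  have "(\<Sum>l<m. integral\<^sup>L lborel (\<lambda>u. e j u * Ps l \<bar>T j u\<bar>)) = integral\<^sup>L lborel (\<lambda>u. \<Sum>l<m. e j u * Ps l \<bar>T j u\<bar>)"
    by (rule Bochner_Integration.integral_sum[symmetric]) (auto intro: ePs_int[OF j])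
  also have "\<dots> = integral\<^sup>L lborel (\<lambda>u. real m * (e j u * Pb \<bar>T j u\<bar>))"
    by (rule Bochner_Integration.integral_cong[OF refl]) (simp add: sum_distrib_left[symmetric] Pb_eq[symmetric])
  also have "\<dots> = real m * integral\<^sup>L lborel (\<lambda>u. e j u * Pb \<bar>T j u\<bar>)" by simp
  finally show ?thesis .
qed

lemma cj_eq:
  assumes j: "j < m"
  shows "integral\<^sup>L lborel (\<lambda>u. e j u * Pb \<bar>T j u\<bar>) =
       1/2 * set_lebesgue_integral lborel {y. q j 1 y < q j (-1) y} (\<lambda>y. Pb \<bar>T j y\<bar> * q j 1 y)
     + 1/2 * set_lebesgue_integral lborel {y. q j 1 y > q j (-1) y} (\<lambda>y. Pb \<bar>T j y\<bar> * q j (-1) y)"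
proof -
  let ?A1 = "{y. q j 1 y < q j (-1) y}" and ?A2 = "{y. q j 1 y > q j (-1) y}"
  have A1: "?A1 \<in> sets lborel" by measurable
  have A2: "?A2 \<in> sets lborel" by measurable
  have iq: "integrable lborel (\<lambda>y. Pb \<bar>T j y\<bar> * q j \<beta> y)" for \<beta>
  proof -
    have m1: "(\<lambda>y. Pb \<bar>T j y\<bar> * q j \<beta> y) \<in> borel_measurable lborel" by measurable
    show ?thesis
      apply (rule Bochner_Integration.integrable_bound[OF q_int[of j \<beta>] m1])
      apply (rule AE_I2)
      apply (simp add: abs_mult Pb_ge0 q_nn)
      apply (subst mult.commute)
      apply (rule mult_left_le)
       apply (rule Pb_le1)
      apply (rule q_nn)
      done
  qed
  have i1: "integrable lborel (\<lambda>y. indicator ?A1 y * (Pb \<bar>T j y\<bar> * q j 1 y))"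
    using integrable_mult_indicator[OF A1 iq] by simp
  have i2: "integrable lborel (\<lambda>y. indicator ?A2 y * (Pb \<bar>T j y\<bar> * q j (-1) y))"
    using integrable_mult_indicator[OF A2 iq] by simp
  have pw: "e j u * Pb \<bar>T j u\<bar> = 1/2 * (indicator ?A1 u * (Pb \<bar>T j u\<bar> * q j 1 u)) + 1/2 * (indicator ?A2 u * (Pb \<bar>T j u\<bar> * q j (-1) u))" for u
  proof -
    have h: "indicator {u. q j 1 u \<ge> q j (-1) u} u * q j (-1) u * Pb \<bar>T j u\<bar> = indicator ?A2 u * (Pb \<bar>T j u\<bar> * q j (-1) u)"
    proof (cases "q j 1 u = q j (-1) u")
      case True
      have "T j u = 0" unfolding llr_def using True qpos j by simp
      then show ?thesis by (simp add: Pb0)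
    next
      case False then show ?thesis by (auto simp: indicator_def)
    qed
    have "e j u * Pb \<bar>T j u\<bar> = 1/2 * (indicator ?A1 u * q j 1 u * Pb \<bar>T j u\<bar>) + 1/2 * (indicator {u. q j 1 u \<ge> q j (-1) u} u * q j (-1) u * Pb \<bar>T j u\<bar>)"
      unfolding e_formula[OF j] by (simp only: distrib_right mult.assoc)
    also have "\<dots> = 1/2 * (indicator ?A1 u * (Pb \<bar>T j u\<bar> * q j 1 u)) + 1/2 * (indicator ?A2 u * (Pb \<bar>T j u\<bar> * q j (-1) u))"
      unfolding h by (simp only: mult.assoc mult.commute[of "q j 1 u"])
    finally show ?thesis .
  qed
  have "integral\<^sup>L lborel (\<lambda>u. e j u * Pb \<bar>T j u\<bar>) = integral\<^sup>L lborel (\<lambda>u. 1/2 * (indicator ?A1 u * (Pb \<bar>T j u\<bar> * q j 1 u)) + 1/2 * (indicator ?A2 u * (Pb \<bar>T j u\<bar> * q j (-1) u)))"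
    by (simp only: pw)
  also have "\<dots> = 1/2 * integral\<^sup>L lborel (\<lambda>u. indicator ?A1 u * (Pb \<bar>T j u\<bar> * q j 1 u)) + 1/2 * integral\<^sup>L lborel (\<lambda>u. indicator ?A2 u * (Pb \<bar>T j u\<bar> * q j (-1) u))"
    by (subst Bochner_Integration.integral_add) (use i1 i2 in auto)
  finally show ?thesis unfolding set_lebesgue_integral_def by simp
qed

end


context orb begin

definition F1 :: "nat \<Rightarrow> nat \<Rightarrow> (nat \<Rightarrow> nat \<Rightarrow> real) \<Rightarrow> (nat \<Rightarrow> 'a) \<Rightarrow> real" where
  "F1 i j x y = errf (x i) j (y i)"

definition F2 :: "nat \<Rightarrow> nat \<Rightarrow> nat \<Rightarrow> nat \<Rightarrow> (nat \<Rightarrow> nat \<Rightarrow> real) \<Rightarrow> (nat \<Rightarrow> 'a) \<Rightarrow> real" where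
  "F2 i j k l x y = cmpf (k < i \<or> (k = i \<and> l < j)) l j (y k) (y i) * errf (x i) j (y i)"

lemma card_sum: fixes N M :: nat shows "real (card {(k,l). k < N \<and> l < M \<and> P k l}) = (\<Sum>k<N. \<Sum>l<M. if P k l then 1 else 0)"
proof -
  have e: "{(k,l). k < N \<and> l < M \<and> P k l} = Sigma {..<N} (\<lambda>k. {l\<in>{..<M}. P k l})" by auto
  have "card {(k,l). k < N \<and> l < M \<and> P k l} = (\<Sum>k<N. card {l\<in>{..<M}. P k l})"
    unfolding e by (rule card_SigmaI) simp_all
  moreover have "real (card {l\<in>{..<M}. P k l}) = (\<Sum>l<M. if P k l then 1 else 0)" for k
    by (simp add: sum.inter_filter[symmetric])
  ultimately show ?thesis by simp
qed

lemma D_decomp: "orbgrand_D N m (\<lambda>i j. T j (y i)) x =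
   (1 / (real (m*N))^2) * (\<Sum>i<N. \<Sum>j<m. (F1 i j x y + (\<Sum>k<N. \<Sum>l<m. F2 i j k l x y)))"
proof -
  let ?P = "\<lambda>i j k l. \<bar>T l (y k)\<bar> < \<bar>T j (y i)\<bar> \<or> (\<bar>T l (y k)\<bar> = \<bar>T j (y i)\<bar> \<and> (k < i \<or> (k = i \<and> l < j)))"
  have r: "real (rank_of (\<lambda>k l. \<bar>T l (y k)\<bar>) N m i j) = 1 + (\<Sum>k<N. \<Sum>l<m. if ?P i j k l then 1 else 0)" for i j
    unfolding rank_of_def using card_sum[of N m "?P i j"] by simp
  have t: "real (rank_of (\<lambda>k l. \<bar>T l (y k)\<bar>) N m i j) / real (m * N) * (if sgnb (T j (y i)) * x i j < 0 then 1 else 0)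
     = (1 / real (m*N)) * (F1 i j x y + (\<Sum>k<N. \<Sum>l<m. F2 i j k l x y))" for i j
    unfolding r F1_def F2_def cmpf_def errf_def
    by (simp add: sum_distrib_right distrib_right)
  show ?thesis
    unfolding orbgrand_D_def t
    by (simp add: sum_divide_distrib[symmetric] power2_eq_square)
qed

lemma comp_meas:
  assumes "k < N"
  shows "(\<lambda>y. y k) \<in> measurable (PM N) lborel"
  using measurable_component_singleton[of k "{..<N}" "\<lambda>_. lborel"] assms by auto

lemma F1_meas: "i < N \<Longrightarrow> F1 i j x \<in> borel_measurable (PM N)"
  unfolding F1_def[abs_def] using measurable_compose[OF comp_meas errf_meas] by simp

lemma F2_meas: "i < N \<Longrightarrow> k < N \<Longrightarrow> F2 i j k l x \<in> borel_measurable (PM N)"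
proof -
  assume i: "i < N" and k: "k < N"
  have pm: "(\<lambda>y. (y i, y k)) \<in> measurable (PM N) (lborel \<Otimes>\<^sub>M lborel)"
    by (rule measurable_Pair[OF comp_meas[OF i] comp_meas[OF k]])
  have "(\<lambda>y. (\<lambda>(u,v). errf (x i) j u * cmpf (k < i \<or> (k = i \<and> l < j)) l j v u) (y i, y k)) \<in> borel_measurable (PM N)"
    by (rule measurable_compose[OF pm g_meas])
  then show ?thesis unfolding F2_def[abs_def] by (simp add: mult.commute)
qed

lemma F1_01: "0 \<le> F1 i j x y" "F1 i j x y \<le> 1"
  unfolding F1_def by (auto simp: errf_01)

lemma F2_01: "0 \<le> F2 i j k l x y" "F2 i j k l x y \<le> 1"
  unfolding F2_def by (auto intro: mult_nonneg_nonneg mult_le_one simp: errf_01 cmpf_01)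

lemma F1_intg: "i < N \<Longrightarrow> intg N (F1 i j)"
  by (rule intg_bdd) (auto simp: F1_meas abs_le_iff intro: order_trans[OF _ F1_01(1)] F1_01(2))

lemma F2_intg: "i < N \<Longrightarrow> k < N \<Longrightarrow> intg N (F2 i j k l)"
  by (rule intg_bdd) (auto simp: F2_meas abs_le_iff intro: order_trans[OF _ F2_01(1)] F2_01(2))

end


context orb begin

definition cj :: "nat \<Rightarrow> real" where
  "cj j = integral\<^sup>L lborel (\<lambda>u. e j u * Pb \<bar>T j u\<bar>)"

lemma ED_eq: "expected_D m S \<mu> p N = EE N (\<lambda>x y. orbgrand_D N m (\<lambda>i j. T j (y i)) x)"
  unfolding expected_D_def EE_def X_def Z_def ..

lemma G_intg: "i < N \<Longrightarrow> intg N (\<lambda>x y. F1 i j x y + (\<Sum>k<N. \<Sum>l<m. F2 i j k l x y))"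
  by (intro intg_add F1_intg intg_sum F2_intg) auto

lemma EE_G: "i < N \<Longrightarrow> EE N (\<lambda>x y. F1 i j x y + (\<Sum>k<N. \<Sum>l<m. F2 i j k l x y))
    = EE N (F1 i j) + (\<Sum>k<N. \<Sum>l<m. EE N (F2 i j k l))"
proof -
  assume i: "i < N"
  have "EE N (\<lambda>x y. F1 i j x y + (\<Sum>k<N. \<Sum>l<m. F2 i j k l x y)) = EE N (F1 i j) + EE N (\<lambda>x y. \<Sum>k<N. \<Sum>l<m. F2 i j k l x y)"
  proof (rule EE_add[OF F1_intg[OF i]])
    show "intg N (\<lambda>x y. \<Sum>k<N. \<Sum>l<m. F2 i j k l x y)"
      by (intro intg_sum F2_intg) (auto simp: i)
  qed
  also have "EE N (\<lambda>x y. \<Sum>k<N. \<Sum>l<m. F2 i j k l x y) = (\<Sum>k<N. EE N (\<lambda>x y. \<Sum>l<m. F2 i j k l x y))"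
    using EE_sum[of "{..<N}" N "\<lambda>k x y. \<Sum>l<m. F2 i j k l x y"] by (simp add: intg_sum F2_intg i)
  also have "\<dots> = (\<Sum>k<N. \<Sum>l<m. EE N (F2 i j k l))"
  proof (rule sum.cong[OF refl])
    fix k assume "k \<in> {..<N}"
    then show "EE N (\<lambda>x y. \<Sum>l<m. F2 i j k l x y) = (\<Sum>l<m. EE N (F2 i j k l))"
      using EE_sum[of "{..<m}" N "\<lambda>l. F2 i j k l"] by (simp add: F2_intg i)
  qed
  finally show ?thesis .
qed

lemma ED_sum: "expected_D m S \<mu> p N = (1 / (real (m*N))^2) *
   (\<Sum>i<N. \<Sum>j<m. (EE N (F1 i j) + (\<Sum>k<N. \<Sum>l<m. EE N (F2 i j k l))))"
proof -
  have "expected_D m S \<mu> p N = EE N (\<lambda>x y. (1 / (real (m*N))^2) * (\<Sum>i<N. \<Sum>j<m. (F1 i j x y + (\<Sum>k<N. \<Sum>l<m. F2 i j k l x y))))"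
    unfolding ED_eq D_decomp ..
  also have "\<dots> = (1 / (real (m*N))^2) * EE N (\<lambda>x y. \<Sum>i<N. \<Sum>j<m. (F1 i j x y + (\<Sum>k<N. \<Sum>l<m. F2 i j k l x y)))"
    by (rule EE_cmult)
  also have "EE N (\<lambda>x y. \<Sum>i<N. \<Sum>j<m. (F1 i j x y + (\<Sum>k<N. \<Sum>l<m. F2 i j k l x y)))
      = (\<Sum>i<N. EE N (\<lambda>x y. \<Sum>j<m. (F1 i j x y + (\<Sum>k<N. \<Sum>l<m. F2 i j k l x y))))"
    using EE_sum[of "{..<N}" N "\<lambda>i x y. \<Sum>j<m. (F1 i j x y + (\<Sum>k<N. \<Sum>l<m. F2 i j k l x y))"]
    by (simp add: intg_sum G_intg)
  also have "\<dots> = (\<Sum>i<N. \<Sum>j<m. (EE N (F1 i j) + (\<Sum>k<N. \<Sum>l<m. EE N (F2 i j k l))))"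
  proof (rule sum.cong[OF refl])
    fix i assume i: "i \<in> {..<N}"
    have "EE N (\<lambda>x y. \<Sum>j<m. (F1 i j x y + (\<Sum>k<N. \<Sum>l<m. F2 i j k l x y))) = (\<Sum>j<m. EE N (\<lambda>x y. F1 i j x y + (\<Sum>k<N. \<Sum>l<m. F2 i j k l x y)))"
      using EE_sum[of "{..<m}" N "\<lambda>j x y. F1 i j x y + (\<Sum>k<N. \<Sum>l<m. F2 i j k l x y)"] i
      by (simp add: G_intg)
    also have "\<dots> = (\<Sum>j<m. (EE N (F1 i j) + (\<Sum>k<N. \<Sum>l<m. EE N (F2 i j k l))))"
      using i by (simp add: EE_G)
    finally show "EE N (\<lambda>x y. \<Sum>j<m. (F1 i j x y + (\<Sum>k<N. \<Sum>l<m. F2 i j k l x y))) = (\<Sum>j<m. (EE N (F1 i j) + (\<Sum>k<N. \<Sum>l<m. EE N (F2 i j k l))))" .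
  qed
  finally show ?thesis .
qed

lemma inner:
  assumes i: "i < N" and j: "j < m"
  shows "(\<Sum>k<N. \<Sum>l<m. EE N (F2 i j k l)) = (\<Sum>l<m. EE N (F2 i j i l)) + (real N - 1) * (real m * cj j)"
proof -
  have far: "(\<Sum>l<m. EE N (F2 i j k l)) = real m * cj j" if k: "k \<in> {..<N} - {i}" for k
  proof -
    have "(\<Sum>l<m. EE N (F2 i j k l)) = (\<Sum>l<m. integral\<^sup>L lborel (\<lambda>u. e j u * Ps l \<bar>T j u\<bar>))"
    proof (rule sum.cong[OF refl])
      fix l assume "l \<in> {..<m}"
      then show "EE N (F2 i j k l) = integral\<^sup>L lborel (\<lambda>u. e j u * Ps l \<bar>T j u\<bar>)"
        unfolding F2_def[abs_def] using EE_far[of i N k j l] i k j by auto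
    qed
    also have "\<dots> = real m * cj j" unfolding cj_def by (rule sumA[OF j])
    finally show ?thesis .
  qed
  have "(\<Sum>k<N. \<Sum>l<m. EE N (F2 i j k l)) = (\<Sum>l<m. EE N (F2 i j i l)) + (\<Sum>k\<in>{..<N}-{i}. \<Sum>l<m. EE N (F2 i j k l))"
    using i by (subst sum.remove[of _ i]) auto
  also have "(\<Sum>k\<in>{..<N}-{i}. \<Sum>l<m. EE N (F2 i j k l)) = (\<Sum>k\<in>{..<N}-{i}. real m * cj j)"
    by (rule sum.cong[OF refl]) (rule far)
  also have "\<dots> = (real N - 1) * (real m * cj j)"
    using i by (simp add: of_nat_diff)
  finally show ?thesis .
qed

lemma EE_F1_bounds: "i < N \<Longrightarrow> 0 \<le> EE N (F1 i j) \<and> EE N (F1 i j) \<le> 1"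
  using EE_bounds[of N "F1 i j"] F1_meas F1_01 by auto

lemma EE_F2_bounds: "i < N \<Longrightarrow> k < N \<Longrightarrow> 0 \<le> EE N (F2 i j k l) \<and> EE N (F2 i j k l) \<le> 1"
  using EE_bounds[of N "F2 i j k l"] F2_meas F2_01 by auto

end


context orb begin

lemma main_lim: "(\<lambda>N. expected_D m S \<mu> p N) \<longlonglongrightarrow> (1 / real m) * (\<Sum>j<m. cj j)"
proof -
  define C where "C = (\<Sum>j<m. cj j)"
  define r where "r N i j = EE N (F1 i j) + (\<Sum>l<m. EE N (F2 i j i l))" for N i j
  define R where "R N = (1 / (real (m*N))^2) * (\<Sum>i<N. \<Sum>j<m. r N i j)" for N
  have rb: "0 \<le> r N i j \<and> r N i j \<le> 1 + real m" if "i < N" for N i j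
  proof -
    have "(\<Sum>l<m. EE N (F2 i j i l)) \<le> (\<Sum>l<(m::nat). 1)" by (rule sum_mono) (use EE_F2_bounds that in auto)
    moreover have "0 \<le> (\<Sum>l<m. EE N (F2 i j i l))" by (rule sum_nonneg) (use EE_F2_bounds that in auto)
    ultimately show ?thesis unfolding r_def using EE_F1_bounds[OF that, of j] by auto
  qed
  have mpos: "real m > 0" using m by simp
  have decomp: "expected_D m S \<mu> p N = C / real m - (C / real m) / real N + R N" if N: "N \<ge> 1" for N
  proof -
    have "expected_D m S \<mu> p N = (1 / (real (m*N))^2) * (\<Sum>i<N. \<Sum>j<m. (r N i j + (real N - 1) * (real m * cj j)))"
      unfolding ED_sum r_def
      by (intro arg_cong[where f="\<lambda>z. _ * z"] sum.cong refl) (simp add: inner)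
    also have "\<dots> = R N + (1 / (real (m*N))^2) * (\<Sum>i<N. \<Sum>j<m. (real N - 1) * (real m * cj j))"
      unfolding R_def by (simp add: sum.distrib distrib_left)
    also have "(\<Sum>i<N. \<Sum>j<m. (real N - 1) * (real m * cj j)) = real N * ((real N - 1) * real m * C)"
      unfolding C_def by (simp add: sum_distrib_left mult.assoc)
    also have "(1 / (real (m*N))^2) * (real N * ((real N - 1) * real m * C)) = C / real m - (C / real m) / real N"
      using N mpos by (simp add: field_simps power2_eq_square)
    finally show ?thesis by simp
  qed
  have Rb: "0 \<le> R N \<and> R N \<le> ((1 + real m) / real m) / real N" if N: "N \<ge> 1" for N
  proof -
    have s0: "0 \<le> (\<Sum>i<N. \<Sum>j<m. r N i j)" by (intro sum_nonneg) (use rb in auto)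
    have "(\<Sum>i<N. \<Sum>j<m. r N i j) \<le> (\<Sum>i<N. \<Sum>j<(m::nat). 1 + real m)" by (intro sum_mono) (use rb in auto)
    also have "\<dots> = real N * real m * (1 + real m)" by simp
    finally have s1: "(\<Sum>i<N. \<Sum>j<m. r N i j) \<le> real N * real m * (1 + real m)" .
    have "R N \<le> (1 / (real (m*N))^2) * (real N * real m * (1 + real m))"
      unfolding R_def by (rule mult_left_mono[OF s1]) simp
    also have "\<dots> = ((1 + real m) / real m) / real N" using N mpos by (simp add: field_simps power2_eq_square)
    finally show ?thesis unfolding R_def using s0 by simp
  qed
  have lim1: "(\<lambda>N. C / real m - (C / real m) / real N + R N) \<longlonglongrightarrow> C / real m - 0 + 0"
  proof (intro tendsto_intros)
    show "R \<longlonglongrightarrow> 0"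
    proof (rule tendsto_sandwich[of "\<lambda>_. 0" R sequentially "\<lambda>N. ((1 + real m) / real m) / real N"])
      show "eventually (\<lambda>N. 0 \<le> R N) sequentially" using Rb eventually_sequentially by blast
      show "eventually (\<lambda>N. R N \<le> ((1 + real m) / real m) / real N) sequentially" using Rb eventually_sequentially by blast
      show "(\<lambda>N. ((1 + real m) / real m) / real N) \<longlonglongrightarrow> 0" by (rule lim_const_over_n)
    qed simp
  qed
  have ev: "eventually (\<lambda>N. C / real m - (C / real m) / real N + R N = expected_D m S \<mu> p N) sequentially"
    using decomp eventually_sequentially by (metis (mono_tags, lifting))
  have "(\<lambda>N. expected_D m S \<mu> p N) \<longlonglongrightarrow> C / real m"
    using Lim_transform_eventually[OF lim1 ev] by simp
  then show ?thesis unfolding C_def by simp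
qed

end

theorem lemma7:
  fixes m :: nat and S :: "'s set" and \<mu> :: "(nat \<Rightarrow> real) \<Rightarrow> 's"
    and p :: "'s \<Rightarrow> 'a::euclidean_space \<Rightarrow> real"
  assumes m: "m \<ge> 1"
    and S: "finite S" "card S = 2 ^ m"
    and mu: "bij_betw \<mu> (bitvecs m) S"
    and dens: "\<forall>s\<in>S. p s \<in> borel_measurable lborel \<and> (\<forall>y. p s y \<ge> 0)
                 \<and> integrable lborel (p s) \<and> integral\<^sup>L lborel (p s) = 1"
    and qpos: "\<forall>j<m. \<forall>y. qbit m S \<mu> p j 1 y > 0 \<and> qbit m S \<mu> p j (-1) y > 0"
    and A1: "\<forall>j<m. \<exists>M1>0. \<exists>a>0. \<exists>S1 :: real poly. \<forall>y. norm y > M1 \<longrightarrow>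
               qbit m S \<mu> p j 1 y < poly S1 (norm y) * exp (- a * norm y) \<and>
               qbit m S \<mu> p j (-1) y < poly S1 (norm y) * exp (- a * norm y)"
    and A2: "\<forall>j<m. \<exists>M2>0. \<exists>S2 :: real poly. \<forall>y. norm y > M2 \<longrightarrow>
               \<bar>llr m S \<mu> p j y\<bar> < poly S2 (norm y)"
    and A3: "\<forall>j<m. smooth_cdf (Psi m S \<mu> p j)" "smooth_cdf (Psibar m S \<mu> p)"
  shows "(\<lambda>N. expected_D m S \<mu> p N) \<longlonglongrightarrow>
    (1 / real m) * (\<Sum>j<m.
       1/2 * set_lebesgue_integral lborel {y. qbit m S \<mu> p j 1 y < qbit m S \<mu> p j (-1) y}
               (\<lambda>y. Psibar m S \<mu> p \<bar>llr m S \<mu> p j y\<bar> * qbit m S \<mu> p j 1 y)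
     + 1/2 * set_lebesgue_integral lborel {y. qbit m S \<mu> p j 1 y > qbit m S \<mu> p j (-1) y}
               (\<lambda>y. Psibar m S \<mu> p \<bar>llr m S \<mu> p j y\<bar> * qbit m S \<mu> p j (-1) y))"
proof -
  interpret orb m S \<mu> p
    using m S mu dens qpos A3(1) by unfold_locales auto
  have "(\<Sum>j<m.
       1/2 * set_lebesgue_integral lborel {y. qbit m S \<mu> p j 1 y < qbit m S \<mu> p j (-1) y}
               (\<lambda>y. Psibar m S \<mu> p \<bar>llr m S \<mu> p j y\<bar> * qbit m S \<mu> p j 1 y)
     + 1/2 * set_lebesgue_integral lborel {y. qbit m S \<mu> p j 1 y > qbit m S \<mu> p j (-1) y}
               (\<lambda>y. Psibar m S \<mu> p \<bar>llr m S \<mu> p j y\<bar> * qbit m S \<mu> p j (-1) y)) = (\<Sum>j<m. cj j)"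
    by (rule sum.cong[OF refl]) (simp add: cj_def cj_eq)
  then show ?thesis using main_lim by simp
qed

end
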